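(* Let $\alpha\in(0,\pi/2)$, $\theta^*_d>0$ and $E_s$ satisfy $E_s>\frac{(\theta^*_d)^2}{2\cos^2\alpha}+\cos\alpha$. Put $$L^*_d=\sqrt{2E_s-(\theta^*_d)^2-2\cos\alpha},\qquad Y^*=\cos\alpha+\tfrac12\left(\theta^*_d\sin\alpha-L^*_d\cos\alpha\right)^2 .$$ Let $$b=4\theta^*_dL^*_d-2\frac{\theta^*_d}{L^*_d}\left((\theta^*_d)^2-\cos\alpha\right)-\tfrac12\pi^2\sin\alpha,\qquad \Delta=\pi^2(\theta^*_d)^2+8\alpha b .$$ Assume $\Delta\ge0$, and define the spring stiffness $$K=\frac{\left(\pi\theta^*_d+\sqrt{\Delta}\right)^2}{16\alpha^2},\qquad \varepsilon=1/\sqrt K .$$ For $Y\in(\cos\alpha,E_s)$ define $\theta_d(Y)$ and $L_d(Y)$ as in the context. Define the angle swept in stance by $$\Delta\theta(Y)=\pi\theta_d(Y)\,\varepsilon+\Big[4\theta_d(Y)L_d(Y)-2\frac{\theta_d(Y)}{L_d(Y)}\big(\theta_d(Y)^2-\cos\alpha\big)-\tfrac12\pi^2\sin\alpha\Big]\varepsilon^2,$$ and the apex return map by $$f(Y)=\cos\big(\alpha-\Delta\theta(Y)\big)+\Big[\sin\big(2\alpha-\Delta\theta(Y)\big)\sqrt{E_s-Y}+\cos\big(2\alpha-\Delta\theta(Y)\big)\sqrt{Y-\cos\alpha}\Big]^2 .$$ Let $d_i\Delta\theta^*=\frac{d}{dY}\Delta\theta(Y)\big|_{Y=Y^*}$ and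 $$D=\theta^*_d\cos2\alpha\,\sqrt{2E_s-(\theta^*_d)^2-2\cos\alpha}+\sin2\alpha\left[E_s-(\theta^*_d)^2-\cos\alpha\right].$$ If $$d_i\Delta\theta^*\in\left(0,\ \frac{2}{\sin\alpha+D}\right),$$ then $Y^*$ is a stable fixed point of $f$, that is, $f(Y^* )=Y^*$ and $|f'(Y^* )|<1$.
   Context: This concerns the dimensionless spring-mass (spring-loaded inverted pendulum) running model with leg rest length $1$, attack angle $\alpha$ (touch-down at $\theta=-\alpha$, height $\cos\alpha$) and total energy $E_s$. For an apex height $Y$, the touch-down angular velocity and radial speed are $$\theta_d(Y)=\sqrt2\left[\cos\alpha\sqrt{E_s-Y}-\sin\alpha\sqrt{Y-\cos\alpha}\right],\qquad L_d(Y)=\sqrt2\left[\sin\alpha\sqrt{E_s-Y}+\cos\alpha\sqrt{Y-\cos\alpha}\right].$$ The quantity $\Delta\theta$ is the second-order (in $\varepsilon=K^{-1/2}$) asymptotic approximation of the stance sweep angle. The map $f$ sends one flight apex height to the next. The stiffness $K$ is chosen so that the stance is symmetric at $Y^*$, i.e. $\Delta\theta(Y^* )=2\alpha$. Note that $\theta_d(Y^* )=\theta^*_d$ and $L_d(Y^* )=L^*_d$. *)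

theory Defs
  imports "HOL-Analysis.Analysis"
begin

text \<open>Dimensionless SLIP model: leg rest length 1, attack angle alpha, energy Es,
  eps = K^(-1/2).\<close>

definition theta_d :: "real \<Rightarrow> real \<Rightarrow> real \<Rightarrow> real" where
  "theta_d alpha Es Y = sqrt 2 * (cos alpha * sqrt (Es - Y) - sin alpha * sqrt (Y - cos alpha))"

definition L_d :: "real \<Rightarrow> real \<Rightarrow> real \<Rightarrow> real" where
  "L_d alpha Es Y = sqrt 2 * (sin alpha * sqrt (Es - Y) + cos alpha * sqrt (Y - cos alpha))"

definition Delta_theta :: "real \<Rightarrow> real \<Rightarrow> real \<Rightarrow> real \<Rightarrow> real" where
  "Delta_theta alpha Es eps Y =
     (let th = theta_d alpha Es Y; L = L_d alpha Es Y in
      pi * th * eps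
      + (4 * th * L - 2 * (th / L) * (th\<^sup>2 - cos alpha) - pi\<^sup>2 * sin alpha / 2) * eps\<^sup>2)"

definition apex_map :: "real \<Rightarrow> real \<Rightarrow> real \<Rightarrow> real \<Rightarrow> real" where
  "apex_map alpha Es eps Y =
     (let dt = Delta_theta alpha Es eps Y in
      cos (alpha - dt)
      + (sin (2 * alpha - dt) * sqrt (Es - Y) + cos (2 * alpha - dt) * sqrt (Y - cos alpha))\<^sup>2)"

end

theory Submission
  imports Defs
begin

lemma apex_deriv:
  fixes g :: "real \<Rightarrow> real"
  assumes g: "(g has_real_derivative g') (at y)" and y: "c < y" "y < Es"
  shows "((\<lambda>Y. cos (alpha - g Y) + (sin (2 * alpha - g Y) * sqrt (Es - Y)
            + cos (2 * alpha - g Y) * sqrt (Y - c))\<^sup>2) has_real_derivative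
     (sin (alpha - g y) * g' + 2 * (sin (2 * alpha - g y) * sqrt (Es - y) + cos (2 * alpha - g y) * sqrt (y - c))
      * (- cos (2 * alpha - g y) * g' * sqrt (Es - y) - sin (2 * alpha - g y) / (2 * sqrt (Es - y))
         + sin (2 * alpha - g y) * g' * sqrt (y - c) + cos (2 * alpha - g y) / (2 * sqrt (y - c))))) (at y)"
  using y
  apply (auto intro!: derivative_eq_intros g)
  apply (simp add: inverse_eq_divide algebra_simps)
  done

theorem theorem2:
  fixes alpha thd Es :: real
  assumes alpha: "0 < alpha" "alpha < pi / 2"
    and thd: "0 < thd"
    and Es: "Es > thd\<^sup>2 / (2 * (cos alpha)\<^sup>2) + cos alpha"
  defines "Ld \<equiv> sqrt (2 * Es - thd\<^sup>2 - 2 * cos alpha)"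
  defines "Ystar \<equiv> cos alpha + (thd * sin alpha - Ld * cos alpha)\<^sup>2 / 2"
  defines "b \<equiv> 4 * thd * Ld - 2 * (thd / Ld) * (thd\<^sup>2 - cos alpha) - pi\<^sup>2 * sin alpha / 2"
  defines "Dl \<equiv> pi\<^sup>2 * thd\<^sup>2 + 8 * alpha * b"
  defines "K \<equiv> (pi * thd + sqrt Dl)\<^sup>2 / (16 * alpha\<^sup>2)"
  defines "eps \<equiv> 1 / sqrt K"
  defines "D \<equiv> thd * cos (2 * alpha) * sqrt (2 * Es - thd\<^sup>2 - 2 * cos alpha)
               + sin (2 * alpha) * (Es - thd\<^sup>2 - cos alpha)"
  assumes Dl_nonneg: "Dl \<ge> 0"
    and deriv_pos: "deriv (Delta_theta alpha Es eps) Ystar > 0"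
    and deriv_bound: "deriv (Delta_theta alpha Es eps) Ystar < 2 / (sin alpha + D)"
  shows "apex_map alpha Es eps Ystar = Ystar
         \<and> apex_map alpha Es eps differentiable (at Ystar)
         \<and> \<bar>deriv (apex_map alpha Es eps) Ystar\<bar> < 1"
proof -
  define c where "c = cos alpha"
  define s where "s = sin alpha"
  have c: "c > 0" unfolding c_def using alpha by (intro cos_gt_zero_pi) auto
  have s: "s > 0" unfolding s_def using alpha by (intro sin_gt_zero) auto
  have sc: "s\<^sup>2 + c\<^sup>2 = 1" unfolding s_def c_def by simp
  have Es2: "2 * Es - 2 * c > thd\<^sup>2 / c\<^sup>2" using Es unfolding c_def by (simp add: field_simps)
  hence Es3: "(2 * Es - 2 * c) * c\<^sup>2 > thd\<^sup>2" using c by (simp add: field_simps)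
  have nn: "0 \<le> 2 * Es - thd\<^sup>2 - 2 * cos alpha"
  proof -
    have c2: "c\<^sup>2 \<le> 1" using sc zero_le_power2[of s] by linarith
    have "thd\<^sup>2 * c\<^sup>2 \<le> thd\<^sup>2" using mult_left_le[OF c2, of "thd\<^sup>2"] by simp
    hence "thd\<^sup>2 / c\<^sup>2 \<ge> thd\<^sup>2" using c by (simp add: le_divide_eq)
    thus ?thesis using Es2 unfolding c_def by linarith
  qed
  have Ldsq: "Ld\<^sup>2 = 2 * Es - thd\<^sup>2 - 2 * c"
    unfolding Ld_def c_def by (rule real_sqrt_pow2[OF nn])
  have Ld0: "Ld \<ge> 0" unfolding Ld_def using nn by simp
  have "(Ld * c)\<^sup>2 > (thd * s)\<^sup>2"
  proof -
    have "(Ld * c)\<^sup>2 = (2 * Es - 2 * c) * c\<^sup>2 - thd\<^sup>2 * c\<^sup>2" unfolding power_mult_distrib Ldsq by (simp add: algebra_simps)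
    also have "\<dots> > thd\<^sup>2 - thd\<^sup>2 * c\<^sup>2" using Es3 by simp
    also have "thd\<^sup>2 - thd\<^sup>2 * c\<^sup>2 = (thd * s)\<^sup>2"
    proof -
      have e: "s\<^sup>2 = 1 - c\<^sup>2" using sc by simp
      show ?thesis unfolding power_mult_distrib e by (simp add: algebra_simps)
    qed
    finally show ?thesis .
  qed
  moreover have "0 \<le> Ld * c" using Ld0 c by simp
  ultimately have LT: "Ld * c > thd * s" by (rule power_less_imp_less_base)
  have "thd * s > 0" using thd s by simp
  hence "Ld * c > 0" using LT by linarith
  hence Ldpos: "Ld > 0" using c by (simp add: zero_less_mult_iff)
  define A where "A = (thd * c + Ld * s) / sqrt 2"
  define B where "B = (Ld * c - thd * s) / sqrt 2"
  have Apos: "A > 0" unfolding A_def using thd c Ldpos s by (simp add: add_pos_pos)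
  have Bpos: "B > 0" unfolding B_def using LT by simp
  have Yd: "Ystar = c + (thd * s - Ld * c)\<^sup>2 / 2" unfolding Ystar_def c_def s_def by simp
  have B2: "B\<^sup>2 = (Ld * c - thd * s)\<^sup>2 / 2" unfolding B_def by (simp add: power_divide)
  have A2: "A\<^sup>2 = (thd * c + Ld * s)\<^sup>2 / 2" unfolding A_def by (simp add: power_divide)
  have Ys: "Ystar = c + B\<^sup>2" unfolding Yd B2 by (simp add: power2_commute)
  have "(thd * s - Ld * c)\<^sup>2 + (thd * c + Ld * s)\<^sup>2 = (thd\<^sup>2 + Ld\<^sup>2) * (s\<^sup>2 + c\<^sup>2)"
    by (simp add: power2_eq_square algebra_simps)
  hence "(thd * s - Ld * c)\<^sup>2 + (thd * c + Ld * s)\<^sup>2 = 2 * Es - 2 * c" using sc Ldsq by simp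
  hence EsY: "Es - Ystar = A\<^sup>2" unfolding Yd A2 by linarith
  have sqA: "sqrt (Es - Ystar) = A" using EsY Apos by simp
  have sqB: "sqrt (Ystar - cos alpha) = B" using Ys Bpos c_def by simp
  have Y1: "cos alpha < Ystar" using Ys Bpos c_def by simp
  have "A\<^sup>2 > 0" using Apos by simp
  hence Y2: "Ystar < Es" using EsY by linarith
  have th: "theta_d alpha Es Ystar = thd"
  proof -
    have "theta_d alpha Es Ystar = sqrt 2 * (c * A - s * B)"
      unfolding theta_d_def sqA sqB c_def s_def by simp
    also have "\<dots> = c * (thd * c + Ld * s) - s * (Ld * c - thd * s)"
      unfolding A_def B_def by (simp add: field_simps)
    also have "\<dots> = thd * (s\<^sup>2 + c\<^sup>2)" by (simp add: power2_eq_square algebra_simps)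
    finally show ?thesis using sc by simp
  qed
  have Lth: "L_d alpha Es Ystar = Ld"
  proof -
    have "L_d alpha Es Ystar = sqrt 2 * (s * A + c * B)"
      unfolding L_d_def sqA sqB c_def s_def by simp
    also have "\<dots> = s * (thd * c + Ld * s) + c * (Ld * c - thd * s)"
      unfolding A_def B_def by (simp add: field_simps)
    also have "\<dots> = Ld * (s\<^sup>2 + c\<^sup>2)" by (simp add: power2_eq_square algebra_simps)
    finally show ?thesis using sc by simp
  qed
  define p where "p = pi * thd"
  define q where "q = sqrt Dl"
  have p: "p > 0" unfolding p_def using thd by simp
  have q: "q \<ge> 0" "q\<^sup>2 = p\<^sup>2 + 8 * alpha * b" unfolding q_def p_def using Dl_nonneg Dl_def
    by (auto simp: power_mult_distrib)
  have s16: "sqrt (16 * alpha\<^sup>2) = 4 * alpha"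
  proof -
    have "16 * alpha\<^sup>2 = (4 * alpha)\<^sup>2" by (simp add: power_mult_distrib)
    thus ?thesis using alpha by (simp only: real_sqrt_abs)
  qed
  have sK: "sqrt K = (p + q) / (4 * alpha)" unfolding K_def p_def[symmetric] q_def[symmetric]
    using p q alpha by (simp add: real_sqrt_divide s16)
  have epsv: "eps = 4 * alpha / (p + q)" unfolding eps_def sK using p q alpha by simp
  have DT: "Delta_theta alpha Es eps Ystar = 2 * alpha"
  proof -
    have "Delta_theta alpha Es eps Ystar = p * eps + b * eps\<^sup>2"
      unfolding Delta_theta_def Let_def th Lth p_def b_def by simp
    also have "\<dots> = 2 * alpha"
    proof -
      have "p + q > 0" using p q by simp
      hence h: "eps * (p + q) = 4 * alpha" using epsv by simp
      have "8 * alpha * (p * eps + b * eps\<^sup>2) = 8 * alpha * p * eps + (8 * alpha * b) * eps\<^sup>2"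
        by (simp add: algebra_simps)
      also have "\<dots> = 8 * alpha * p * eps + (q - p) * eps * (eps * (p + q))"
        using q(2) by (simp add: power2_eq_square algebra_simps)
      also have "\<dots> = 8 * alpha * p * eps + (q - p) * eps * (4 * alpha)" by (simp only: h)
      also have "\<dots> = 4 * alpha * (eps * (p + q))" by (simp add: algebra_simps)
      also have "\<dots> = 8 * alpha * (2 * alpha)" by (simp only: h)
      finally show ?thesis using alpha by simp
    qed
    finally show ?thesis .
  qed
  have Ldne: "L_d alpha Es Ystar \<noteq> 0" using Lth Ldpos by simp
  have "\<exists>d. (Delta_theta alpha Es eps has_real_derivative d) (at Ystar)"
    using Y1 Y2 Ldne
    unfolding Delta_theta_def[abs_def] Let_def theta_d_def L_d_def
    by (intro exI) (auto intro!: derivative_eq_intros)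
  hence dtD: "(Delta_theta alpha Es eps has_real_derivative deriv (Delta_theta alpha Es eps) Ystar) (at Ystar)"
    using DERIV_deriv_iff_real_differentiable real_differentiable_def by blast
  define g' where "g' = deriv (Delta_theta alpha Es eps) Ystar"
  have am: "apex_map alpha Es eps = (\<lambda>Y. cos (alpha - Delta_theta alpha Es eps Y) + (sin (2 * alpha - Delta_theta alpha Es eps Y) * sqrt (Es - Y)
            + cos (2 * alpha - Delta_theta alpha Es eps Y) * sqrt (Y - cos alpha))\<^sup>2)"
    unfolding apex_map_def[abs_def] Let_def by simp
  have AD: "(apex_map alpha Es eps has_real_derivative 1 - g' * (s + D)) (at Ystar)"
  proof -
    have DD: "2 * A * B = D"
    proof -
      have "2 * A * B = (thd * c + Ld * s) * (Ld * c - thd * s)" unfolding A_def B_def by simp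
      also have "\<dots> = thd * Ld * (c\<^sup>2 - s\<^sup>2) + s * c * (Ld\<^sup>2 - thd\<^sup>2)"
        by (simp add: power2_eq_square algebra_simps)
      also have "\<dots> = D" unfolding D_def Ld_def[symmetric] Ldsq c_def s_def cos_double sin_double
        by (simp add: algebra_simps)
      finally show ?thesis .
    qed
    have e: "sin (alpha - 2 * alpha) * g' + 2 * (0 * A + 1 * B) * (- 1 * g' * A - 0 / (2 * A) + 0 * g' * B + 1 / (2 * B))
       = 1 - g' * (s + D)" unfolding DD[symmetric] s_def using Bpos by (simp add: field_simps)
    have "(apex_map alpha Es eps has_real_derivative
       (sin (alpha - 2 * alpha) * g' + 2 * (0 * A + 1 * B) * (- 1 * g' * A - 0 / (2 * A) + 0 * g' * B + 1 / (2 * B)))) (at Ystar)"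
      using apex_deriv[OF dtD Y1 Y2, of alpha] unfolding am g'_def[symmetric] DT sqA sqB by simp
    thus ?thesis unfolding e .
  qed
  have sD: "s + D > 0"
  proof (rule ccontr)
    assume "\<not> s + D > 0"
    hence "2 / (sin alpha + D) \<le> 0" unfolding s_def by (simp add: divide_nonpos_nonpos)
    thus False using deriv_pos deriv_bound by linarith
  qed
  have "g' * (s + D) < 2" using sD deriv_bound unfolding g'_def s_def
    by (simp add: field_simps)
  moreover have "g' * (s + D) > 0" using sD deriv_pos unfolding g'_def by simp
  moreover have "deriv (apex_map alpha Es eps) Ystar = 1 - g' * (s + D)" using AD by (rule DERIV_imp_deriv)
  moreover have "apex_map alpha Es eps Ystar = Ystar"
    unfolding am DT using Ys sqB c_def by simp
  ultimately show ?thesis using AD real_differentiable_def by auto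
qed

end
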